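(* Let $\mathcal H$ be a Hilbert space, $A$ a bounded, everywhere defined, symmetric operator on $\mathcal H$, and $P$ a self-adjoint operator on $\mathcal H$. Suppose that $D(PA)=D(P)$ (where $D(PA)=\{x\in\mathcal H: Ax\in D(P)\}$) and that there is a bounded operator $B$ on $\mathcal H$ with $BD(P)\subset D(P)$ such that $PAf-APf=Bf$ for every $f\in D(P)$. Then $AP$ is closed and $APA$ is self-adjoint.
   Context: Products of operators carry their natural domains; $D(AP)=D(P)$ and $D(APA)=D(PA)$. *)

theory Defs
  imports "HOL-Analysis.Analysis"
begin

text \<open>Complex Hilbert spaces (the library only has real inner product spaces):
  a complete real normed space with a complex scalar multiplication extending the
  real one and a complex inner product (conjugate-linear in the first argument)
  inducing the norm.\<close>

class chilbert_space = real_normed_vector + complete_space +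
  fixes scaleC :: "complex \<Rightarrow> 'a \<Rightarrow> 'a"
    and cinner :: "'a \<Rightarrow> 'a \<Rightarrow> complex"
  assumes scaleC_of_real: "scaleC (complex_of_real r) x = scaleR r x"
    and scaleC_add_right: "scaleC c (x + y) = scaleC c x + scaleC c y"
    and scaleC_add_left: "scaleC (c + d) x = scaleC c x + scaleC d x"
    and scaleC_scaleC: "scaleC c (scaleC d x) = scaleC (c * d) x"
    and scaleC_one: "scaleC 1 x = x"
    and cinner_commute: "cinner x y = cnj (cinner y x)"
    and cinner_add_left: "cinner (x + y) z = cinner x z + cinner y z"
    and cinner_scaleC_left: "cinner (scaleC c x) y = cnj c * cinner x y"
    and cinner_self_real: "Im (cinner x x) = 0"
    and cinner_self_nonneg: "0 \<le> Re (cinner x x)"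
    and cinner_self_eq_0: "cinner x x = 0 \<longleftrightarrow> x = 0"
    and norm_eq_sqrt_cinner: "norm x = sqrt (Re (cinner x x))"

definition csubspace :: "'a::chilbert_space set \<Rightarrow> bool" where
  "csubspace S \<longleftrightarrow> 0 \<in> S \<and> (\<forall>x\<in>S. \<forall>y\<in>S. x + y \<in> S) \<and> (\<forall>c. \<forall>x\<in>S. scaleC c x \<in> S)"

definition linear_op :: "'a::chilbert_space set \<Rightarrow> ('a \<Rightarrow> 'a) \<Rightarrow> bool" where
  "linear_op D T \<longleftrightarrow> csubspace D \<and>
     (\<forall>x\<in>D. \<forall>y\<in>D. T (x + y) = T x + T y) \<and>
     (\<forall>c. \<forall>x\<in>D. T (scaleC c x) = scaleC c (T x))"

definition bounded_op :: "('a::chilbert_space \<Rightarrow> 'a) \<Rightarrow> bool" where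
  "bounded_op T \<longleftrightarrow> linear_op UNIV T \<and> (\<exists>K. \<forall>x. norm (T x) \<le> K * norm x)"

definition symmetric_bounded_op :: "('a::chilbert_space \<Rightarrow> 'a) \<Rightarrow> bool" where
  "symmetric_bounded_op T \<longleftrightarrow> bounded_op T \<and> (\<forall>x y. cinner (T x) y = cinner x (T y))"

definition op_graph :: "'a set \<Rightarrow> ('a \<Rightarrow> 'a) \<Rightarrow> ('a \<times> 'a) set" where
  "op_graph D T = {(x, T x) | x. x \<in> D}"

definition adjoint_graph :: "'a::chilbert_space set \<Rightarrow> ('a \<Rightarrow> 'a) \<Rightarrow> ('a \<times> 'a) set" where
  "adjoint_graph D T = {(y, z). \<forall>x\<in>D. cinner (T x) y = cinner x z}"

definition closed_op :: "'a::chilbert_space set \<Rightarrow> ('a \<Rightarrow> 'a) \<Rightarrow> bool" where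
  "closed_op D T \<longleftrightarrow> closed (op_graph D T)"

definition self_adjoint_op :: "'a::chilbert_space set \<Rightarrow> ('a \<Rightarrow> 'a) \<Rightarrow> bool" where
  "self_adjoint_op D T \<longleftrightarrow> linear_op D T \<and> closure D = UNIV \<and> adjoint_graph D T = op_graph D T"

end

theory Submission
  imports Defs
begin

lemma scaleC_minus1: "scaleC (-1) (x::'a::chilbert_space) = - x"
  using scaleC_of_real[of "-1" x] by simp

lemma cinner_minus_left: "cinner (- x) (y::'a::chilbert_space) = - cinner x y"
  using cinner_scaleC_left[of "-1" x y] by (simp add: scaleC_minus1)

lemma cinner_diff_left: "cinner (x - y) (z::'a::chilbert_space) = cinner x z - cinner y z"
  using cinner_add_left[of x "-y" z] by (simp add: cinner_minus_left)

lemma cinner_add_right: "cinner x (y + z) = cinner x y + cinner x (z::'a::chilbert_space)"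
  by (metis cinner_add_left cinner_commute complex_cnj_add)

lemma cinner_minus_right: "cinner x (- y) = - cinner x (y::'a::chilbert_space)"
  by (metis cinner_minus_left cinner_commute complex_cnj_minus)

lemma cinner_diff_right: "cinner x (y - z) = cinner x y - cinner x (z::'a::chilbert_space)"
  by (metis cinner_diff_left cinner_commute complex_cnj_diff)

lemma norm_sq_cinner: "(norm (x::'a::chilbert_space))^2 = Re (cinner x x)"
  using norm_eq_sqrt_cinner[of x] cinner_self_nonneg[of x] by simp

lemma Re_cinner_polar: "Re (cinner a (u::'a::chilbert_space)) = ((norm (a+u))^2 - (norm (a-u))^2)/4"
proof -
  have c: "cinner u a = cnj (cinner a u)" by (rule cinner_commute)
  show ?thesis
    unfolding norm_sq_cinner
    by (simp add: cinner_add_left cinner_add_right cinner_diff_left cinner_diff_right c)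
qed

lemma Im_cinner: "Im (cinner a (u::'a::chilbert_space)) = Re (cinner (scaleC \<i> a) u)"
  by (simp add: cinner_scaleC_left)

lemma tendsto_cinner_right:
  fixes f :: "'b \<Rightarrow> 'a::chilbert_space"
  assumes "(f \<longlongrightarrow> l) F"
  shows "((\<lambda>n. cinner a (f n)) \<longlongrightarrow> cinner a l) F"
proof -
  have re: "((\<lambda>n. Re (cinner b (f n))) \<longlongrightarrow> Re (cinner b l)) F" for b
    unfolding Re_cinner_polar by (intro tendsto_intros assms) simp_all
  show ?thesis
    unfolding tendsto_complex_iff using re[of a] re[of "scaleC \<i> a"] by (simp add: Im_cinner)
qed

lemma tendsto_cinner_left:
  fixes f :: "'b \<Rightarrow> 'a::chilbert_space"
  assumes "(f \<longlongrightarrow> l) F"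
  shows "((\<lambda>n. cinner (f n) a) \<longlongrightarrow> cinner l a) F"
proof -
  have "((\<lambda>n. cnj (cinner a (f n))) \<longlongrightarrow> cnj (cinner a l)) F"
    by (intro tendsto_cnj tendsto_cinner_right assms)
  moreover have "(\<lambda>n. cinner (f n) a) = (\<lambda>n. cnj (cinner a (f n)))"
    by (rule ext, rule cinner_commute)
  moreover have "cinner l a = cnj (cinner a l)" by (rule cinner_commute)
  ultimately show ?thesis by simp
qed

lemma orth_dense:
  fixes w :: "'a::chilbert_space"
  assumes "closure D = UNIV" "\<And>x. x\<in>D \<Longrightarrow> cinner x w = 0"
  shows "w = 0"
proof -
  have "w \<in> closure D" using assms by simp
  then obtain s where s: "\<And>n. s n \<in> D" "s \<longlonglongrightarrow> w" unfolding closure_sequential by blast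
  have "(\<lambda>n. cinner (s n) w) \<longlonglongrightarrow> cinner w w" by (rule tendsto_cinner_left[OF s(2)])
  moreover have "(\<lambda>n. cinner (s n) w) = (\<lambda>n. 0)" using assms(2) s(1) by auto
  ultimately have "cinner w w = 0" using LIMSEQ_unique tendsto_const by metis
  then show ?thesis using cinner_self_eq_0 by blast
qed

lemma bounded_op_bl: assumes "bounded_op (T::'a::chilbert_space \<Rightarrow> 'a)" shows "bounded_linear T"
proof -
  from assms obtain K where K: "\<And>x. norm (T x) \<le> K * norm x"
    and add: "\<And>x y. T (x+y) = T x + T y" and sc: "\<And>c x. T (scaleC c x) = scaleC c (T x)"
    unfolding bounded_op_def linear_op_def by blast
  show ?thesis
  proof (rule bounded_linear_intro[where K=K])
    show "T (x + y) = T x + T y" for x y by (rule add)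
    show "T (r *\<^sub>R x) = r *\<^sub>R T x" for r x using sc[of "complex_of_real r" x] by (simp add: scaleC_of_real)
    show "norm (T x) \<le> norm x * K" for x using K[of x] by (simp add: mult.commute)
  qed
qed

theorem mainTheorem2:
  fixes A B P :: "'a::chilbert_space \<Rightarrow> 'a" and DP :: "'a set"
  assumes A_sym: "symmetric_bounded_op A"
    and P_sa: "self_adjoint_op DP P"
    and dom_PA: "{x. A x \<in> DP} = DP"
    and B_bdd: "bounded_op B"
    and B_dom: "B ` DP \<subseteq> DP"
    and comm: "\<And>f. f \<in> DP \<Longrightarrow> P (A f) - A (P f) = B f"
  shows "closed_op DP (\<lambda>x. A (P x)) \<and> self_adjoint_op {x. A x \<in> DP} (\<lambda>x. A (P (A x)))"
proof -
  have Abl: "bounded_linear A" and Asym: "\<And>x y. cinner (A x) y = cinner x (A y)"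
    using A_sym bounded_op_bl unfolding symmetric_bounded_op_def by auto
  have Bbl: "bounded_linear B" using B_bdd bounded_op_bl by auto
  have Alin: "\<And>c x. A (scaleC c x) = scaleC c (A x)"
    and Aadd: "\<And>x y. A (x + y) = A x + A y"
    using A_sym unfolding symmetric_bounded_op_def bounded_op_def linear_op_def by blast+
  have csub: "csubspace DP" and Padd: "\<And>x y. x\<in>DP \<Longrightarrow> y\<in>DP \<Longrightarrow> P (x+y) = P x + P y"
    and Psc: "\<And>c x. x\<in>DP \<Longrightarrow> P (scaleC c x) = scaleC c (P x)"
    and dense: "closure DP = UNIV" and adj: "adjoint_graph DP P = op_graph DP P"
    using P_sa unfolding self_adjoint_op_def linear_op_def by blast+
  have adjI: "y \<in> DP \<and> z = P y" if "\<And>x. x\<in>DP \<Longrightarrow> cinner (P x) y = cinner x z" for y z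
  proof -
    have "(y,z) \<in> adjoint_graph DP P" using that unfolding adjoint_graph_def by auto
    then show ?thesis using adj unfolding op_graph_def by auto
  qed
  have Psym: "cinner (P x) y = cinner x (P y)" if "x\<in>DP" "y\<in>DP" for x y
  proof -
    have "(y, P y) \<in> adjoint_graph DP P" using adj that(2) unfolding op_graph_def by auto
    then show ?thesis using that(1) unfolding adjoint_graph_def by auto
  qed
  have ADP: "A x \<in> DP" if "x \<in> DP" for x using dom_PA that by blast
  have DPA: "x \<in> DP" if "A x \<in> DP" for x using dom_PA that by blast
  have commB: "B f = P (A f) - A (P f)" if "f \<in> DP" for f using comm[OF that] by simp
  have commP: "P (A f) = A (P f) + B f" if "f \<in> DP" for f
    using comm[OF that] by (metis diff_add_cancel add.commute)
  have skew0: "cinner (B x) u = - cinner x (B u)" if "x\<in>DP" "u\<in>DP" for x u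
  proof -
    have "cinner (B x) u = cinner (P (A x)) u - cinner (A (P x)) u"
      by (simp add: commB[OF that(1)] cinner_diff_left)
    also have "... = cinner x (A (P u)) - cinner x (P (A u))"
      using Psym[OF ADP[OF that(1)] that(2)] Psym[OF that(1) ADP[OF that(2)]] Asym by simp
    also have "... = - cinner x (B u)"
      by (simp add: commB[OF that(2)] cinner_diff_right)
    finally show ?thesis .
  qed
  have skew: "cinner (B x) u = - cinner x (B u)" if "x\<in>DP" for x u
  proof -
    have "u \<in> closure DP" using dense by simp
    then obtain s where s: "\<And>n. s n \<in> DP" "s \<longlonglongrightarrow> u" unfolding closure_sequential by blast
    have l1: "(\<lambda>n. cinner (B x) (s n)) \<longlonglongrightarrow> cinner (B x) u" by (rule tendsto_cinner_right[OF s(2)])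
    have l2: "(\<lambda>n. - cinner x (B (s n))) \<longlonglongrightarrow> - cinner x (B u)"
      by (intro tendsto_minus tendsto_cinner_right bounded_linear.tendsto[OF Bbl] s(2))
    have "(\<lambda>n. cinner (B x) (s n)) = (\<lambda>n. - cinner x (B (s n)))" using skew0[OF that s(1)] by auto
    with l1 l2 show ?thesis using LIMSEQ_unique by metis
  qed
  have part1: "closed_op DP (\<lambda>x. A (P x))"
    unfolding closed_op_def closed_sequential_limits
  proof (intro allI impI, elim conjE)
    fix s and l :: "'a \<times> 'a"
    assume mem: "\<forall>n. s n \<in> op_graph DP (\<lambda>x. A (P x))" and lim: "s \<longlonglongrightarrow> l"
    define f where "f = (\<lambda>n. fst (s n))"
    obtain f0 g where l: "l = (f0, g)" by (cases l)
    have fDP: "f n \<in> DP" and sn: "s n = (f n, A (P (f n)))" for n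
      using mem[rule_format, of n] unfolding op_graph_def f_def by auto
    have fl: "f \<longlonglongrightarrow> f0" using tendsto_fst[OF lim] unfolding f_def l by simp
    have gl: "(\<lambda>n. A (P (f n))) \<longlonglongrightarrow> g" using tendsto_snd[OF lim] unfolding sn l by simp
    have PAl: "(\<lambda>n. P (A (f n))) \<longlonglongrightarrow> g + B f0"
    proof -
      have "(\<lambda>n. A (P (f n)) + B (f n)) \<longlonglongrightarrow> g + B f0"
        by (intro tendsto_add gl bounded_linear.tendsto[OF Bbl] fl)
      moreover have "(\<lambda>n. P (A (f n))) = (\<lambda>n. A (P (f n)) + B (f n))"
        using commP fDP by auto
      ultimately show ?thesis by simp
    qed
    have Al: "(\<lambda>n. A (f n)) \<longlonglongrightarrow> A f0" by (rule bounded_linear.tendsto[OF Abl fl])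
    have "\<And>x. x\<in>DP \<Longrightarrow> cinner (P x) (A f0) = cinner x (g + B f0)"
    proof -
      fix x assume x: "x \<in> DP"
      have e: "(\<lambda>n. cinner (P x) (A (f n))) = (\<lambda>n. cinner x (P (A (f n))))"
        using Psym[OF x ADP[OF fDP]] by auto
      have "(\<lambda>n. cinner (P x) (A (f n))) \<longlonglongrightarrow> cinner (P x) (A f0)" by (rule tendsto_cinner_right[OF Al])
      moreover have "(\<lambda>n. cinner (P x) (A (f n))) \<longlonglongrightarrow> cinner x (g + B f0)"
        unfolding e by (rule tendsto_cinner_right[OF PAl])
      ultimately show "cinner (P x) (A f0) = cinner x (g + B f0)" by (rule LIMSEQ_unique)
    qed
    from adjI[OF this] have h1: "A f0 \<in> DP" and h2: "P (A f0) = g + B f0" by auto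
    have f0: "f0 \<in> DP" using DPA[OF h1] .
    have "A (P f0) = g" using commP[OF f0] h2 by simp
    then show "l \<in> op_graph DP (\<lambda>x. A (P x))" unfolding l op_graph_def using f0 by auto
  qed
  have fwd: "cinner (A (P (A x))) y = cinner x (A (P (A y)))" if "x\<in>DP" "y\<in>DP" for x y
    using Psym[OF ADP[OF that(1)] ADP[OF that(2)]] Asym by simp
  have part2: "self_adjoint_op DP (\<lambda>x. A (P (A x)))"
    unfolding self_adjoint_op_def
  proof (intro conjI)
    show "linear_op DP (\<lambda>x. A (P (A x)))"
      unfolding linear_op_def
    proof (intro conjI ballI allI)
      show "csubspace DP" by (rule csub)
    next
      fix x y assume "x\<in>DP" "y\<in>DP"
      then show "A (P (A (x + y))) = A (P (A x)) + A (P (A y))"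
        using Padd ADP Aadd by simp
    next
      fix c x assume "x \<in> DP"
      then show "A (P (A (scaleC c x))) = scaleC c (A (P (A x)))" using Psc ADP Alin by simp
    qed
    show "closure DP = UNIV" by (rule dense)
    show "adjoint_graph DP (\<lambda>x. A (P (A x))) = op_graph DP (\<lambda>x. A (P (A x)))"
    proof
      show "op_graph DP (\<lambda>x. A (P (A x))) \<subseteq> adjoint_graph DP (\<lambda>x. A (P (A x)))"
        unfolding op_graph_def adjoint_graph_def using fwd by auto
      show "adjoint_graph DP (\<lambda>x. A (P (A x))) \<subseteq> op_graph DP (\<lambda>x. A (P (A x)))"
      proof
        fix p assume "p \<in> adjoint_graph DP (\<lambda>x. A (P (A x)))"
        then obtain y z where p: "p = (y,z)" and h: "\<And>x. x\<in>DP \<Longrightarrow> cinner (A (P (A x))) y = cinner x z"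
          unfolding adjoint_graph_def by auto
        have "\<And>x. x\<in>DP \<Longrightarrow> cinner (P x) (A (A y)) = cinner x (z + B (A y))"
        proof -
          fix x assume x: "x\<in>DP"
          have "cinner x z = cinner (P (A x)) (A y)" using h[OF x] Asym by simp
          also have "... = cinner (A (P x)) (A y) + cinner (B x) (A y)"
            using commP[OF x] cinner_add_left by simp
          also have "... = cinner (P x) (A (A y)) - cinner x (B (A y))" using Asym skew[OF x] by simp
          finally show "cinner (P x) (A (A y)) = cinner x (z + B (A y))" by (simp add: cinner_add_right)
        qed
        from adjI[OF this] have "A (A y) \<in> DP" by auto
        then have y: "y \<in> DP" using DPA by blast
        have "\<And>x. x \<in> DP \<Longrightarrow> cinner x (z - A (P (A y))) = 0"
          using h fwd[OF _ y] by (simp add: cinner_diff_right)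
        then have "z - A (P (A y)) = 0" using orth_dense[OF dense] by blast
        then show "p \<in> op_graph DP (\<lambda>x. A (P (A x)))" unfolding p op_graph_def using y by auto
      qed
    qed
  qed
  show ?thesis using part1 part2 dom_PA by simp
qed

end
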